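(* There exists an infinite class of 4-planar graphs such that no graph $G$ in the class admits a planar octilinear drawing without bends, and every planar octilinear drawing of a graph $G$ with $n$ vertices in the class having at most one bend per edge has $\Omega(n)$ bends in total.
   Context: A $k$-planar graph is a planar graph in which every vertex has degree at most $k$. An octilinear drawing of a graph places every vertex on a point of the integer grid and draws every edge as a polyline consisting of horizontal, vertical and diagonal (slope $\pm 1$) line segments; a bend is a point of an edge where two consecutive segments of different slopes meet. The drawing is planar if no two edges cross. *)

theory Defs
  imports "HOL-Analysis.Analysis"
begin

type_synonym pt = "real \<times> real"

definition simple_graph :: "'a set \<Rightarrow> 'a set set \<Rightarrow> bool" where
  "simple_graph V E \<longleftrightarrow> finite V \<and> (\<forall>e\<in>E. \<exists>u v. u \<in> V \<and> v \<in> V \<and> u \<noteq> v \<and> e = {u, v})"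

definition degree :: "'a set set \<Rightarrow> 'a \<Rightarrow> nat" where
  "degree E v = card {e \<in> E. v \<in> e}"

definition seg :: "pt list \<Rightarrow> nat \<Rightarrow> pt set" where
  "seg ps i = closed_segment (ps ! i) (ps ! Suc i)"

definition poly_path :: "pt list \<Rightarrow> pt set" where
  "poly_path ps = (\<Union>i < length ps - 1. seg ps i)"

definition simple_polyline :: "pt list \<Rightarrow> bool" where
  "simple_polyline ps \<longleftrightarrow> length ps \<ge> 2 \<and>
     (\<forall>i < length ps - 1. ps ! i \<noteq> ps ! Suc i) \<and>
     (\<forall>i j. i < j \<and> j < length ps - 1 \<longrightarrow>
        seg ps i \<inter> seg ps j = (if j = Suc i then {ps ! j} else {}))"

definition octilinear_seg :: "pt \<Rightarrow> pt \<Rightarrow> bool" where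
  "octilinear_seg a b \<longleftrightarrow> (let dx = fst b - fst a; dy = snd b - snd a in
      dx = 0 \<or> dy = 0 \<or> \<bar>dx\<bar> = \<bar>dy\<bar>)"

definition octilinear_polyline :: "pt list \<Rightarrow> bool" where
  "octilinear_polyline ps \<longleftrightarrow> (\<forall>i < length ps - 1. octilinear_seg (ps ! i) (ps ! Suc i))"

definition is_bend :: "pt list \<Rightarrow> nat \<Rightarrow> bool" where
  "is_bend ps i \<longleftrightarrow> 0 < i \<and> i < length ps - 1 \<and>
     (let a = ps ! (i - 1); b = ps ! i; c = ps ! Suc i in
        (fst b - fst a) * (snd c - snd b) - (snd b - snd a) * (fst c - fst b) \<noteq> 0)"

definition bends :: "pt list \<Rightarrow> nat" where
  "bends ps = card {i. is_bend ps i}"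

definition planar_poly_drawing ::
  "'a set \<Rightarrow> 'a set set \<Rightarrow> ('a \<Rightarrow> pt) \<Rightarrow> ('a set \<Rightarrow> pt list) \<Rightarrow> bool" where
  "planar_poly_drawing V E p r \<longleftrightarrow>
     inj_on p V \<and>
     (\<forall>e\<in>E. simple_polyline (r e) \<and>
        (\<exists>u v. e = {u, v} \<and> hd (r e) = p u \<and> last (r e) = p v)) \<and>
     (\<forall>e\<in>E. \<forall>e'\<in>E. e \<noteq> e' \<longrightarrow> poly_path (r e) \<inter> poly_path (r e') \<subseteq> p ` (e \<inter> e')) \<and>
     (\<forall>e\<in>E. \<forall>w\<in>V. w \<notin> e \<longrightarrow> p w \<notin> poly_path (r e))"

text \<open>Planar graph: admits a planar drawing with polygonal edges (equivalent to the
  topological definition).\<close>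
definition planar_graph :: "'a set \<Rightarrow> 'a set set \<Rightarrow> bool" where
  "planar_graph V E \<longleftrightarrow> simple_graph V E \<and> (\<exists>p r. planar_poly_drawing V E p r)"

definition k_planar :: "nat \<Rightarrow> 'a set \<Rightarrow> 'a set set \<Rightarrow> bool" where
  "k_planar k V E \<longleftrightarrow> planar_graph V E \<and> (\<forall>v\<in>V. degree E v \<le> k)"

definition planar_octilinear_drawing ::
  "'a set \<Rightarrow> 'a set set \<Rightarrow> ('a \<Rightarrow> int \<times> int) \<Rightarrow> ('a set \<Rightarrow> pt list) \<Rightarrow> bool" where
  "planar_octilinear_drawing V E q r \<longleftrightarrow>
     planar_poly_drawing V E (\<lambda>v. (real_of_int (fst (q v)), real_of_int (snd (q v)))) r \<and>
     (\<forall>e\<in>E. octilinear_polyline (r e))"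

definition total_bends :: "'a set set \<Rightarrow> ('a set \<Rightarrow> pt list) \<Rightarrow> nat" where
  "total_bends E r = (\<Sum>e\<in>E. bends (r e))"

end

theory Submission
  imports Defs
begin

lemma par_lemma:
  fixes d v :: pt
  assumes "d \<noteq> 0" "fst d * snd v - snd d * fst v = 0"
  shows "\<exists>l. v = l *\<^sub>R d"
proof (cases "fst d = 0")
  case True
  then have "snd d \<noteq> 0" using assms(1) by (simp add: prod_eq_iff)
  then show ?thesis using True assms(2)
    by (intro exI[of _ "snd v / snd d"]) (auto simp: prod_eq_iff field_simps)
next
  case False
  then show ?thesis using assms(2)
    by (intro exI[of _ "fst v / fst d"]) (auto simp: prod_eq_iff field_simps)
qed

lemma no_bends:
  assumes "bends ps = 0"
  shows "\<not> is_bend ps i"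
proof -
  have "finite {i. is_bend ps i}"
    by (rule finite_subset[of _ "{..<length ps}"]) (auto simp: is_bend_def)
  then show ?thesis using assms by (auto simp: bends_def)
qed

lemma line_lemma:
  assumes sp: "simple_polyline ps" and b0: "bends ps = 0"
  shows "\<forall>k < length ps. \<exists>t. ps!k = ps!0 + t *\<^sub>R (ps!1 - ps!0)"
proof -
  define d where "d = ps!1 - ps!0"
  have len: "length ps \<ge> 2" using sp by (simp add: simple_polyline_def)
  have dist: "\<And>i. i < length ps - 1 \<Longrightarrow> ps!i \<noteq> ps!Suc i" using sp by (simp add: simple_polyline_def)
  have d0: "d \<noteq> 0" using dist[of 0] len by (auto simp: d_def)
  have "\<forall>j\<le>k. j < length ps \<longrightarrow> (\<exists>t. ps!j = ps!0 + t *\<^sub>R d)" for k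
  proof (induction k)
    case 0
    then show ?case by (auto intro: exI[of _ 0])
  next
    case (Suc k)
    show ?case
    proof (intro allI impI)
      fix j assume j: "j \<le> Suc k" "j < length ps"
      show "\<exists>t. ps!j = ps!0 + t *\<^sub>R d"
      proof (cases "j \<le> k")
        case True then show ?thesis using Suc.IH j by auto
      next
        case False
        then have jk: "j = Suc k" using j by auto
        show ?thesis
        proof (cases "k = 0")
          case True then show ?thesis using jk by (auto simp: d_def intro: exI[of _ 1])
        next
          case False
          obtain tk where tk: "ps!k = ps!0 + tk *\<^sub>R d" using Suc.IH j jk by auto
          obtain tk1 where tk1: "ps!(k-1) = ps!0 + tk1 *\<^sub>R d" using Suc.IH[rule_format, of "k-1"] j jk by (metis diff_le_self Suc_lessD less_imp_diff_less)
          have ne: "ps!(k-1) \<noteq> ps!k" using dist[of "k-1"] False j jk by auto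
          then have "tk \<noteq> tk1" using tk tk1 by auto
          have "\<not> is_bend ps k" using no_bends[OF b0] .
          then have "(fst (ps!k) - fst (ps!(k-1))) * (snd (ps!Suc k) - snd (ps!k)) -
                (snd (ps!k) - snd (ps!(k-1))) * (fst (ps!Suc k) - fst (ps!k)) = 0"
            using False j jk by (auto simp: is_bend_def Let_def)
          then have "(tk - tk1) * (fst d * snd (ps!Suc k - ps!k) - snd d * fst (ps!Suc k - ps!k)) = 0"
            unfolding tk tk1 by (simp add: algebra_simps)
          then have "fst d * snd (ps!Suc k - ps!k) - snd d * fst (ps!Suc k - ps!k) = 0"
            using \<open>tk \<noteq> tk1\<close> by simp
          then obtain l where "ps!Suc k - ps!k = l *\<^sub>R d" using par_lemma[OF d0] by blast
          then have "ps!Suc k = ps!0 + (tk + l) *\<^sub>R d" using tk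
            by (simp add: algebra_simps scaleR_add_left)
          then show ?thesis using jk by blast
        qed
      qed
    qed
  qed
  then show ?thesis by (auto simp: d_def)
qed

lemma real_seg_union:
  fixes a b c :: real
  shows "closed_segment a c \<subseteq> closed_segment a b \<union> closed_segment b c"
  by (auto simp: closed_segment_eq_real_ivl split: if_splits)

lemma cover_lemma:
  fixes t :: "nat \<Rightarrow> real"
  shows "closed_segment (t 0) (t k) \<subseteq> (\<Union>i<k. closed_segment (t i) (t (Suc i))) \<union> {t 0}"
proof (induction k)
  case 0 then show ?case by simp
next
  case (Suc k)
  have "closed_segment (t 0) (t (Suc k)) \<subseteq> closed_segment (t 0) (t k) \<union> closed_segment (t k) (t (Suc k))"
    by (rule real_seg_union)
  then show ?case using Suc.IH by (auto simp: lessThan_Suc)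
qed

lemma straight_edge:
  assumes sp: "simple_polyline ps" and oc: "octilinear_polyline ps" and b0: "bends ps = 0"
  shows "octilinear_seg (hd ps) (last ps) \<and> closed_segment (hd ps) (last ps) \<subseteq> poly_path ps"
proof -
  define d where "d = ps!1 - ps!0"
  define n where "n = length ps"
  have len: "n \<ge> 2" using sp by (simp add: simple_polyline_def n_def)
  have "\<forall>k<n. \<exists>t. ps!k = ps!0 + t *\<^sub>R d" using line_lemma[OF sp b0] by (simp add: d_def n_def)
  then obtain t where t: "\<And>k. k < n \<Longrightarrow> ps!k = ps!0 + t k *\<^sub>R d" by metis
  define f where "f x = ps!0 + x *\<^sub>R d" for x
  have lin: "linear (\<lambda>x::real. x *\<^sub>R d)" by (simp add: linearI scaleR_add_left)
  have segf: "closed_segment (f x) (f y) = f ` closed_segment x y" for x y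
    unfolding f_def closed_segment_translation closed_segment_linear_image[OF lin] image_image ..
  have e0: "ps!0 = f (t 0)" unfolding f_def by (rule t) (use len in auto)
  have "ps \<noteq> []" using len by (auto simp: n_def)
  then have hd: "hd ps = f (t 0)" using e0 by (simp add: hd_conv_nth)
  have e1: "ps!(n-1) = f (t (n-1))" unfolding f_def by (rule t) (use len in auto)
  have lst: "last ps = f (t (n - 1))" using e1 \<open>ps \<noteq> []\<close> by (simp add: last_conv_nth n_def)
  have "octilinear_seg (ps!0) (ps!1)" using oc len by (auto simp: octilinear_polyline_def n_def)
  then have od: "fst d = 0 \<or> snd d = 0 \<or> \<bar>fst d\<bar> = \<bar>snd d\<bar>"
    by (simp add: octilinear_seg_def d_def Let_def)
  have o1: "octilinear_seg (hd ps) (last ps)"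
    using od unfolding hd lst f_def octilinear_seg_def Let_def by (auto simp: abs_mult left_diff_distrib[symmetric])
  have "closed_segment (hd ps) (last ps) = f ` closed_segment (t 0) (t (n-1))"
    by (simp add: hd lst segf)
  also have "\<dots> \<subseteq> f ` ((\<Union>i<n-1. closed_segment (t i) (t (Suc i))) \<union> {t 0})"
    by (rule image_mono[OF cover_lemma])
  also have "\<dots> \<subseteq> poly_path ps"
  proof
    fix y assume "y \<in> f ` ((\<Union>i<n-1. closed_segment (t i) (t (Suc i))) \<union> {t 0})"
    then obtain x where x: "x \<in> (\<Union>i<n-1. closed_segment (t i) (t (Suc i))) \<union> {t 0}" and y: "y = f x" by auto
    then obtain i where i: "i < n - 1" "x \<in> closed_segment (t i) (t (Suc i))"
    proof (cases "x = t 0")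
      case True
      then show ?thesis using that[of 0] len by auto
    next
      case False
      then show ?thesis using that x by auto
    qed
    have "seg ps i = f ` closed_segment (t i) (t (Suc i))"
    proof -
      have "ps!i = f (t i)" "ps!Suc i = f (t (Suc i))" unfolding f_def by (rule t, use i(1) in linarith)+
      then show ?thesis by (simp add: seg_def segf)
    qed
    then have "y \<in> seg ps i" using i y by auto
    then show "y \<in> poly_path ps" using i by (auto simp: poly_path_def n_def)
  qed
  finally show ?thesis using o1 by simp
qed


lemma oct_disj: "octilinear_seg P Q \<Longrightarrow> (snd P = snd Q \<or> fst P = fst Q \<or> fst Q - fst P = snd Q - snd P \<or> fst Q - fst P = snd P - snd Q)"
  unfolding octilinear_seg_def Let_def by (auto simp: abs_eq_iff)

lemma oct_sym: "octilinear_seg P Q \<Longrightarrow> octilinear_seg Q P"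
  unfolding octilinear_seg_def Let_def by auto

lemma distinct_pt: "(P::pt) \<noteq> Q \<Longrightarrow> fst P \<noteq> fst Q \<or> snd P \<noteq> snd Q"
  by (auto simp: prod_eq_iff)

lemma betw_lemma:
  fixes a b c w :: pt
  assumes "b = a + s *\<^sub>R w" "c = a + t *\<^sub>R w"
  shows "a \<in> closed_segment b c \<or> b \<in> closed_segment a c \<or> c \<in> closed_segment a b"
proof -
  define f where "f x = a + x *\<^sub>R w" for x
  have lin: "linear (\<lambda>x::real. x *\<^sub>R w)" by (simp add: linearI scaleR_add_left)
  have segf: "closed_segment (f x) (f y) = f ` closed_segment x y" for x y
    unfolding f_def closed_segment_translation closed_segment_linear_image[OF lin] image_image ..
  have a: "a = f 0" "b = f s" "c = f t" using assms by (auto simp: f_def)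
  have "0 \<in> closed_segment s t \<or> s \<in> closed_segment 0 t \<or> t \<in> closed_segment 0 s"
    by (auto simp: closed_segment_eq_real_ivl)
  then show ?thesis unfolding a segf by auto
qed

lemma trip_lemma:
  fixes P Q R :: pt
  assumes "P \<notin> closed_segment Q R" "Q \<notin> closed_segment P R" "R \<notin> closed_segment P Q"
  shows "\<not> (snd P = snd Q \<and> snd P = snd R)" "\<not> (fst P = fst Q \<and> fst P = fst R)"
    "\<not> (fst Q - fst P = snd Q - snd P \<and> fst R - fst P = snd R - snd P)"
    "\<not> (fst Q - fst P = snd P - snd Q \<and> fst R - fst P = snd P - snd R)"
proof -
  have *: False if "Q = P + s *\<^sub>R w" "R = P + t *\<^sub>R w" for s t w
    using betw_lemma[OF that] assms by blast
  show "\<not> (snd P = snd Q \<and> snd P = snd R)"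
  proof
    assume h: "snd P = snd Q \<and> snd P = snd R"
    have "Q = P + (fst Q - fst P) *\<^sub>R (1::real, 0::real)" "R = P + (fst R - fst P) *\<^sub>R (1::real, 0::real)"
      using h by (simp_all add: prod_eq_iff)
    then show False by (rule *)
  qed
  show "\<not> (fst P = fst Q \<and> fst P = fst R)"
  proof
    assume h: "fst P = fst Q \<and> fst P = fst R"
    have "Q = P + (snd Q - snd P) *\<^sub>R (0::real, 1::real)" "R = P + (snd R - snd P) *\<^sub>R (0::real, 1::real)"
      using h by (simp_all add: prod_eq_iff)
    then show False by (rule *)
  qed
  show "\<not> (fst Q - fst P = snd Q - snd P \<and> fst R - fst P = snd R - snd P)"
  proof
    assume h: "fst Q - fst P = snd Q - snd P \<and> fst R - fst P = snd R - snd P"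
    have "Q = P + (fst Q - fst P) *\<^sub>R (1::real, 1::real)" "R = P + (fst R - fst P) *\<^sub>R (1::real, 1::real)"
      using h by (simp_all add: prod_eq_iff)
    then show False by (rule *)
  qed
  show "\<not> (fst Q - fst P = snd P - snd Q \<and> fst R - fst P = snd P - snd R)"
  proof
    assume h: "fst Q - fst P = snd P - snd Q \<and> fst R - fst P = snd P - snd R"
    have "Q = P + (fst Q - fst P) *\<^sub>R (1::real, -1::real)" "R = P + (fst R - fst P) *\<^sub>R (1::real, -1::real)"
      using h by (simp_all add: prod_eq_iff)
    then show False by (rule *)
  qed
qed

lemma mid_lemma:
  fixes P Q R S :: pt
  assumes "closed_segment P Q \<inter> closed_segment R S = {}"
  shows "\<not> (fst P + fst Q = fst R + fst S \<and> snd P + snd Q = snd R + snd S)"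
proof
  assume h: "fst P + fst Q = fst R + fst S \<and> snd P + snd Q = snd R + snd S"
  have "midpoint P Q = midpoint R S" using h by (auto simp: midpoint_def prod_eq_iff)
  then have "midpoint P Q \<in> closed_segment P Q \<inter> closed_segment R S"
    by (metis IntI midpoint_in_closed_segment)
  then show False using assms by auto
qed

lemma core:
 fixes xa xb xc xd ya yb yc yd :: real
 assumes
"(ya = yb \<or> xa = xb \<or> xb - xa = yb - ya \<or> xb - xa = ya - yb)"
 and "(xa \<noteq> xb \<or> ya \<noteq> yb)"
 and "(ya = yc \<or> xa = xc \<or> xc - xa = yc - ya \<or> xc - xa = ya - yc)"
 and "(xa \<noteq> xc \<or> ya \<noteq> yc)"
 and "(ya = yd \<or> xa = xd \<or> xd - xa = yd - ya \<or> xd - xa = ya - yd)"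
 and "(xa \<noteq> xd \<or> ya \<noteq> yd)"
 and "(yb = yc \<or> xb = xc \<or> xc - xb = yc - yb \<or> xc - xb = yb - yc)"
 and "(xb \<noteq> xc \<or> yb \<noteq> yc)"
 and "(yb = yd \<or> xb = xd \<or> xd - xb = yd - yb \<or> xd - xb = yb - yd)"
 and "(xb \<noteq> xd \<or> yb \<noteq> yd)"
 and "(yc = yd \<or> xc = xd \<or> xd - xc = yd - yc \<or> xd - xc = yc - yd)"
 and "(xc \<noteq> xd \<or> yc \<noteq> yd)"
 and "\<not> (ya = yb \<and> ya = yc)"
 and "\<not> (xa = xb \<and> xa = xc)"
 and "\<not> (xb - xa = yb - ya \<and> xc - xa = yc - ya)"
 and "\<not> (xb - xa = ya - yb \<and> xc - xa = ya - yc)"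
 and "\<not> (ya = yb \<and> ya = yd)"
 and "\<not> (xa = xb \<and> xa = xd)"
 and "\<not> (xb - xa = yb - ya \<and> xd - xa = yd - ya)"
 and "\<not> (xb - xa = ya - yb \<and> xd - xa = ya - yd)"
 and "\<not> (ya = yc \<and> ya = yd)"
 and "\<not> (xa = xc \<and> xa = xd)"
 and "\<not> (xc - xa = yc - ya \<and> xd - xa = yd - ya)"
 and "\<not> (xc - xa = ya - yc \<and> xd - xa = ya - yd)"
 and "\<not> (yb = yc \<and> yb = yd)"
 and "\<not> (xb = xc \<and> xb = xd)"
 and "\<not> (xc - xb = yc - yb \<and> xd - xb = yd - yb)"
 and "\<not> (xc - xb = yb - yc \<and> xd - xb = yb - yd)"
 and "\<not> (xa + xb = xc + xd \<and> ya + yb = yc + yd)"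
 and "\<not> (xa + xc = xb + xd \<and> ya + yc = yb + yd)"
 and "\<not> (xa + xd = xb + xc \<and> ya + yd = yb + yc)"
 shows False
 using assms by smt

lemma core2:
 fixes A B C D :: pt
 assumes
"(snd A = snd B \<or> fst A = fst B \<or> fst B - fst A = snd B - snd A \<or> fst B - fst A = snd A - snd B)"
 and "(fst A \<noteq> fst B \<or> snd A \<noteq> snd B)"
 and "(snd A = snd C \<or> fst A = fst C \<or> fst C - fst A = snd C - snd A \<or> fst C - fst A = snd A - snd C)"
 and "(fst A \<noteq> fst C \<or> snd A \<noteq> snd C)"
 and "(snd A = snd D \<or> fst A = fst D \<or> fst D - fst A = snd D - snd A \<or> fst D - fst A = snd A - snd D)"
 and "(fst A \<noteq> fst D \<or> snd A \<noteq> snd D)"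
 and "(snd B = snd C \<or> fst B = fst C \<or> fst C - fst B = snd C - snd B \<or> fst C - fst B = snd B - snd C)"
 and "(fst B \<noteq> fst C \<or> snd B \<noteq> snd C)"
 and "(snd B = snd D \<or> fst B = fst D \<or> fst D - fst B = snd D - snd B \<or> fst D - fst B = snd B - snd D)"
 and "(fst B \<noteq> fst D \<or> snd B \<noteq> snd D)"
 and "(snd C = snd D \<or> fst C = fst D \<or> fst D - fst C = snd D - snd C \<or> fst D - fst C = snd C - snd D)"
 and "(fst C \<noteq> fst D \<or> snd C \<noteq> snd D)"
 and "\<not> (snd A = snd B \<and> snd A = snd C)"
 and "\<not> (fst A = fst B \<and> fst A = fst C)"
 and "\<not> (fst B - fst A = snd B - snd A \<and> fst C - fst A = snd C - snd A)"
 and "\<not> (fst B - fst A = snd A - snd B \<and> fst C - fst A = snd A - snd C)"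
 and "\<not> (snd A = snd B \<and> snd A = snd D)"
 and "\<not> (fst A = fst B \<and> fst A = fst D)"
 and "\<not> (fst B - fst A = snd B - snd A \<and> fst D - fst A = snd D - snd A)"
 and "\<not> (fst B - fst A = snd A - snd B \<and> fst D - fst A = snd A - snd D)"
 and "\<not> (snd A = snd C \<and> snd A = snd D)"
 and "\<not> (fst A = fst C \<and> fst A = fst D)"
 and "\<not> (fst C - fst A = snd C - snd A \<and> fst D - fst A = snd D - snd A)"
 and "\<not> (fst C - fst A = snd A - snd C \<and> fst D - fst A = snd A - snd D)"
 and "\<not> (snd B = snd C \<and> snd B = snd D)"
 and "\<not> (fst B = fst C \<and> fst B = fst D)"
 and "\<not> (fst C - fst B = snd C - snd B \<and> fst D - fst B = snd D - snd B)"
 and "\<not> (fst C - fst B = snd B - snd C \<and> fst D - fst B = snd B - snd D)"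
 and "\<not> (fst A + fst B = fst C + fst D \<and> snd A + snd B = snd C + snd D)"
 and "\<not> (fst A + fst C = fst B + fst D \<and> snd A + snd C = snd B + snd D)"
 and "\<not> (fst A + fst D = fst B + fst C \<and> snd A + snd D = snd B + snd C)"
 shows False
 by (rule core[where xa="fst A" and xb="fst B" and xc="fst C" and xd="fst D" and ya="snd A" and yb="snd B" and yc="snd C" and yd="snd D"]) (rule assms)+



lemma k4_geom:
  fixes A B C D :: pt
  assumes o: "octilinear_seg A B" "octilinear_seg A C" "octilinear_seg A D"
     "octilinear_seg B C" "octilinear_seg B D" "octilinear_seg C D"
  and di: "A \<noteq> B" "A \<noteq> C" "A \<noteq> D" "B \<noteq> C" "B \<noteq> D" "C \<noteq> D"
  and n: "A \<notin> closed_segment B C" "A \<notin> closed_segment B D" "A \<notin> closed_segment C D"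
     "B \<notin> closed_segment A C" "B \<notin> closed_segment A D" "B \<notin> closed_segment C D"
     "C \<notin> closed_segment A B" "C \<notin> closed_segment A D" "C \<notin> closed_segment B D"
     "D \<notin> closed_segment A B" "D \<notin> closed_segment A C" "D \<notin> closed_segment B C"
  and dj: "closed_segment A B \<inter> closed_segment C D = {}"
     "closed_segment A C \<inter> closed_segment B D = {}"
     "closed_segment A D \<inter> closed_segment B C = {}"
  shows False
proof -
  note t1 = trip_lemma[of A B C] and t2 = trip_lemma[of A B D] and t3 = trip_lemma[of A C D]
    and t4 = trip_lemma[of B C D]
  show False
    using oct_disj[OF o(1)] distinct_pt[OF di(1)] oct_disj[OF o(2)] distinct_pt[OF di(2)]
      oct_disj[OF o(3)] distinct_pt[OF di(3)] oct_disj[OF o(4)] distinct_pt[OF di(4)]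
      oct_disj[OF o(5)] distinct_pt[OF di(5)] oct_disj[OF o(6)] distinct_pt[OF di(6)]
      t1[OF n(1) n(4) n(7)] t2[OF n(2) n(5) n(10)] t3[OF n(3) n(8) n(11)] t4[OF n(6) n(9) n(12)]
      mid_lemma[OF dj(1)] mid_lemma[OF dj(2)] mid_lemma[OF dj(3)]
    by (rule core2)
qed

lemma edge_info:
  assumes dr: "planar_poly_drawing V E p r" and oc: "\<forall>e\<in>E. octilinear_polyline (r e)"
    and e: "{u,v} \<in> E" and b: "bends (r {u,v}) = 0"
  shows "octilinear_seg (p u) (p v) \<and> closed_segment (p u) (p v) \<subseteq> poly_path (r {u,v})"
proof -
  have "\<forall>e\<in>E. simple_polyline (r e) \<and> (\<exists>u v. e = {u, v} \<and> hd (r e) = p u \<and> last (r e) = p v)"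
    using dr by (simp add: planar_poly_drawing_def)
  from bspec[OF this e] have sp: "simple_polyline (r {u,v})"
    and ex: "\<exists>u' v'. {u,v} = {u', v'} \<and> hd (r {u,v}) = p u' \<and> last (r {u,v}) = p v'" by auto
  from ex obtain u' v' where uv: "{u,v} = {u',v'}" "hd (r {u,v}) = p u'" "last (r {u,v}) = p v'"
    by blast
  have op: "octilinear_polyline (r {u,v})" using bspec[OF oc e] .
  have st: "octilinear_seg (p u') (p v')" "closed_segment (p u') (p v') \<subseteq> poly_path (r {u,v})"
    using straight_edge[OF sp op b] unfolding uv(2,3) by auto
  from uv(1) have "(u = u' \<and> v = v') \<or> (u = v' \<and> v = u')" by (auto simp: doubleton_eq_iff)
  then show ?thesis
  proof
    assume "u = u' \<and> v = v'" then show ?thesis using st by simp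
  next
    assume h: "u = v' \<and> v = u'"
    have "octilinear_seg (p v') (p u')" by (rule oct_sym[OF st(1)])
    moreover have "closed_segment (p v') (p u') \<subseteq> poly_path (r {u,v})"
      using st(2) by (simp add: closed_segment_commute)
    ultimately show ?thesis using h by simp
  qed
qed

lemma k4_drawing:
  assumes dr: "planar_octilinear_drawing V E q r"
    and V: "a \<in> V" "b \<in> V" "c \<in> V" "d \<in> V"
    and di: "a \<noteq> b" "a \<noteq> c" "a \<noteq> d" "b \<noteq> c" "b \<noteq> d" "c \<noteq> d"
    and E: "{a,b} \<in> E" "{a,c} \<in> E" "{a,d} \<in> E" "{b,c} \<in> E" "{b,d} \<in> E" "{c,d} \<in> E"
    and z: "bends (r {a,b}) = 0" "bends (r {a,c}) = 0" "bends (r {a,d}) = 0"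
       "bends (r {b,c}) = 0" "bends (r {b,d}) = 0" "bends (r {c,d}) = 0"
  shows False
proof -
  define p where "p v = (real_of_int (fst (q v)), real_of_int (snd (q v)))" for v
  have pd: "planar_poly_drawing V E p r" and oc: "\<forall>e\<in>E. octilinear_polyline (r e)"
    using dr by (auto simp: planar_octilinear_drawing_def p_def[abs_def])
  have inj: "inj_on p V" using pd by (simp add: planar_poly_drawing_def)
  have nv: "\<And>e w. e \<in> E \<Longrightarrow> w \<in> V \<Longrightarrow> w \<notin> e \<Longrightarrow> p w \<notin> poly_path (r e)"
    using pd by (simp add: planar_poly_drawing_def)
  have ne: "\<And>e e'. e \<in> E \<Longrightarrow> e' \<in> E \<Longrightarrow> e \<noteq> e' \<Longrightarrow> poly_path (r e) \<inter> poly_path (r e') \<subseteq> p ` (e \<inter> e')"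
    using pd by (simp add: planar_poly_drawing_def)
  note i1 = edge_info[OF pd oc E(1) z(1)] and i2 = edge_info[OF pd oc E(2) z(2)]
    and i3 = edge_info[OF pd oc E(3) z(3)] and i4 = edge_info[OF pd oc E(4) z(4)]
    and i5 = edge_info[OF pd oc E(5) z(5)] and i6 = edge_info[OF pd oc E(6) z(6)]
  have pdi: "p a \<noteq> p b" "p a \<noteq> p c" "p a \<noteq> p d" "p b \<noteq> p c" "p b \<noteq> p d" "p c \<noteq> p d"
    using inj V di by (auto dest: inj_onD)
  have nin1: "p a \<notin> closed_segment (p b) (p c)"
    using nv[OF E(4) V(1)] i4 di by auto
  have nin2: "p a \<notin> closed_segment (p b) (p d)"
    using nv[OF E(5) V(1)] i5 di by auto
  have nin3: "p a \<notin> closed_segment (p c) (p d)"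
    using nv[OF E(6) V(1)] i6 di by auto
  have nin4: "p b \<notin> closed_segment (p a) (p c)"
    using nv[OF E(2) V(2)] i2 di by auto
  have nin5: "p b \<notin> closed_segment (p a) (p d)"
    using nv[OF E(3) V(2)] i3 di by auto
  have nin6: "p b \<notin> closed_segment (p c) (p d)"
    using nv[OF E(6) V(2)] i6 di by auto
  have nin7: "p c \<notin> closed_segment (p a) (p b)"
    using nv[OF E(1) V(3)] i1 di by auto
  have nin8: "p c \<notin> closed_segment (p a) (p d)"
    using nv[OF E(3) V(3)] i3 di by auto
  have nin9: "p c \<notin> closed_segment (p b) (p d)"
    using nv[OF E(5) V(3)] i5 di by auto
  have nin10: "p d \<notin> closed_segment (p a) (p b)"
    using nv[OF E(1) V(4)] i1 di by auto
  have nin11: "p d \<notin> closed_segment (p a) (p c)"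
    using nv[OF E(2) V(4)] i2 di by auto
  have nin12: "p d \<notin> closed_segment (p b) (p c)"
    using nv[OF E(4) V(4)] i4 di by auto
  note nin = nin1 nin2 nin3 nin4 nin5 nin6 nin7 nin8 nin9 nin10 nin11 nin12
  have e1: "{a,b} \<noteq> {c,d}" "{a,c} \<noteq> {b,d}" "{a,d} \<noteq> {b,c}" using di by (auto simp: doubleton_eq_iff)
  have e2: "{a,b} \<inter> {c,d} = {}" "{a,c} \<inter> {b,d} = {}" "{a,d} \<inter> {b,c} = {}" using di by auto
  have dj1: "closed_segment (p a) (p b) \<inter> closed_segment (p c) (p d) = {}"
    using ne[OF E(1) E(6) e1(1)] e2(1) i1 i6 by auto
  have dj2: "closed_segment (p a) (p c) \<inter> closed_segment (p b) (p d) = {}"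
    using ne[OF E(2) E(5) e1(2)] e2(2) i2 i5 by auto
  have dj3: "closed_segment (p a) (p d) \<inter> closed_segment (p b) (p c) = {}"
    using ne[OF E(3) E(4) e1(3)] e2(3) i3 i4 by auto
  note dj = dj1 dj2 dj3
  show False
    by (rule k4_geom[OF conjunct1[OF i1] conjunct1[OF i2] conjunct1[OF i3] conjunct1[OF i4]
       conjunct1[OF i5] conjunct1[OF i6] pdi nin dj])
qed

definition P :: "nat \<Rightarrow> pt" where
  "P j = ([(0,0),(4,0),(0,4),(1,1)] :: pt list) ! j"

lemma seg_val:
  fixes X Y W Z x :: pt and a b g :: real
  assumes "x \<in> closed_segment X Y"
  obtains u where "0 \<le> u" "u \<le> 1"
    "a * fst x + b * snd x = (1 - u) * (a * fst X + b * snd X) + u * (a * fst Y + b * snd Y)"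
proof -
  obtain u where u: "0 \<le> u" "u \<le> 1" "x = (1 - u) *\<^sub>R X + u *\<^sub>R Y"
    using assms by (auto simp: in_segment)
  have "a * fst x + b * snd x = (1 - u) * (a * fst X + b * snd X) + u * (a * fst Y + b * snd Y)"
    unfolding u(3) by (simp add: algebra_simps)
  then show ?thesis using u that by blast
qed

lemma seg_le:
  fixes X Y W Z x :: pt and a b g :: real
  assumes "x \<in> closed_segment X Y" "a * fst X + b * snd X \<le> g" "a * fst Y + b * snd Y \<le> g"
  shows "a * fst x + b * snd x \<le> g"
proof -
  obtain u where u: "0 \<le> u" "u \<le> 1"
    "a * fst x + b * snd x = (1 - u) * (a * fst X + b * snd X) + u * (a * fst Y + b * snd Y)"
    using seg_val[OF assms(1)] by blast
  show ?thesis unfolding u(3) by (rule convex_bound_le) (use assms u in auto)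
qed

lemma seg_lt:
  fixes X Y W Z x :: pt and a b g :: real
  assumes "x \<in> closed_segment X Y" "a * fst X + b * snd X < g" "a * fst Y + b * snd Y < g"
  shows "a * fst x + b * snd x < g"
proof -
  obtain u where u: "0 \<le> u" "u \<le> 1"
    "a * fst x + b * snd x = (1 - u) * (a * fst X + b * snd X) + u * (a * fst Y + b * snd Y)"
    using seg_val[OF assms(1)] by blast
  show ?thesis unfolding u(3) by (rule convex_bound_lt) (use assms u in auto)
qed

lemma sep_lemma:
  fixes X Y W Z x :: pt and a b g :: real
  assumes "a * fst X + b * snd X \<le> g" "a * fst Y + b * snd Y \<le> g"
    "a * fst W + b * snd W > g" "a * fst Z + b * snd Z > g"
  shows "closed_segment X Y \<inter> closed_segment W Z = {}"
proof (rule ccontr)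
  assume "closed_segment X Y \<inter> closed_segment W Z \<noteq> {}"
  then obtain x where x: "x \<in> closed_segment X Y" "x \<in> closed_segment W Z" by blast
  have "a * fst x + b * snd x \<le> g" using seg_le[OF x(1) assms(1,2)] .
  moreover have "(-a) * fst x + (-b) * snd x < -g" using seg_lt[OF x(2), of "-a" "-b" "-g"] assms(3,4) by simp
  ultimately show False by simp
qed

lemma psep_lemma:
  fixes X Y W Z x :: pt and a b g :: real
  assumes "a * fst X + b * snd X \<le> g" "a * fst Y + b * snd Y \<le> g"
    "a * fst W + b * snd W > g"
  shows "W \<notin> closed_segment X Y"
  using seg_le[of W X Y a b g] assms by auto

lemma adj_lemma:
  fixes X Y W Z x :: pt and a b g :: real
  assumes "(fst Y - fst X) * (snd Z - snd X) - (snd Y - snd X) * (fst Z - fst X) \<noteq> 0"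
  shows "closed_segment X Y \<inter> closed_segment X Z \<subseteq> {X}"
proof
  fix x assume "x \<in> closed_segment X Y \<inter> closed_segment X Z"
  then have "x \<in> closed_segment X Y" "x \<in> closed_segment X Z" by auto
  then obtain s t where st: "x = (1 - s) *\<^sub>R X + s *\<^sub>R Y" "x = (1 - t) *\<^sub>R X + t *\<^sub>R Z"
    unfolding in_segment by blast
  have e1: "s * (fst Y - fst X) = t * (fst Z - fst X)" and e2: "s * (snd Y - snd X) = t * (snd Z - snd X)"
    using st by (auto simp: prod_eq_iff algebra_simps)
  have "s * ((fst Y - fst X) * (snd Z - snd X) - (snd Y - snd X) * (fst Z - fst X))
      = (s * (fst Y - fst X)) * (snd Z - snd X) - (s * (snd Y - snd X)) * (fst Z - fst X)"
    by (simp add: algebra_simps)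
  also have "\<dots> = (t * (fst Z - fst X)) * (snd Z - snd X) - (t * (snd Z - snd X)) * (fst Z - fst X)"
    by (simp only: e1 e2)
  also have "\<dots> = 0" by (simp add: algebra_simps)
  finally have "s = 0" using assms by simp
  then show "x \<in> {X}" using st by simp
qed

lemma loc_e_01_02: "closed_segment (P 0) (P 1) \<inter> closed_segment (P 0) (P 2) \<subseteq> P ` ({0,1} \<inter> {0,2})"
proof -
  have h: "closed_segment (P 0) (P 1) \<inter> closed_segment (P 0) (P 2) \<subseteq> {P 0}"
    by (rule adj_lemma) (simp add: P_def)
  have eq: "P ` ({0,1} \<inter> {0,2}) = {P 0}" by auto
  show ?thesis unfolding eq  by (rule h)
qed

lemma loc_e_01_03: "closed_segment (P 0) (P 1) \<inter> closed_segment (P 0) (P 3) \<subseteq> P ` ({0,1} \<inter> {0,3})"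
proof -
  have h: "closed_segment (P 0) (P 1) \<inter> closed_segment (P 0) (P 3) \<subseteq> {P 0}"
    by (rule adj_lemma) (simp add: P_def)
  have eq: "P ` ({0,1} \<inter> {0,3}) = {P 0}" by auto
  show ?thesis unfolding eq  by (rule h)
qed

lemma loc_e_01_12: "closed_segment (P 0) (P 1) \<inter> closed_segment (P 1) (P 2) \<subseteq> P ` ({0,1} \<inter> {1,2})"
proof -
  have h: "closed_segment (P 1) (P 0) \<inter> closed_segment (P 1) (P 2) \<subseteq> {P 1}"
    by (rule adj_lemma) (simp add: P_def)
  have eq: "P ` ({0,1} \<inter> {1,2}) = {P 1}" by auto
  show ?thesis unfolding eq closed_segment_commute[of "P 0" "P 1"] by (rule h)
qed

lemma loc_e_01_13: "closed_segment (P 0) (P 1) \<inter> closed_segment (P 1) (P 3) \<subseteq> P ` ({0,1} \<inter> {1,3})"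
proof -
  have h: "closed_segment (P 1) (P 0) \<inter> closed_segment (P 1) (P 3) \<subseteq> {P 1}"
    by (rule adj_lemma) (simp add: P_def)
  have eq: "P ` ({0,1} \<inter> {1,3}) = {P 1}" by auto
  show ?thesis unfolding eq closed_segment_commute[of "P 0" "P 1"] by (rule h)
qed

lemma loc_e_01_23: "closed_segment (P 0) (P 1) \<inter> closed_segment (P 2) (P 3) \<subseteq> P ` ({0,1} \<inter> {2,3})"
proof -
  have "closed_segment (P 0) (P 1) \<inter> closed_segment (P 2) (P 3) = {}"
    by (rule sep_lemma[where a="(0)" and b="(1)" and g="(0)"]) (simp_all add: P_def)
  then show ?thesis by simp
qed

lemma loc_e_02_01: "closed_segment (P 0) (P 2) \<inter> closed_segment (P 0) (P 1) \<subseteq> P ` ({0,2} \<inter> {0,1})"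
proof -
  have h: "closed_segment (P 0) (P 2) \<inter> closed_segment (P 0) (P 1) \<subseteq> {P 0}"
    by (rule adj_lemma) (simp add: P_def)
  have eq: "P ` ({0,2} \<inter> {0,1}) = {P 0}" by auto
  show ?thesis unfolding eq  by (rule h)
qed

lemma loc_e_02_03: "closed_segment (P 0) (P 2) \<inter> closed_segment (P 0) (P 3) \<subseteq> P ` ({0,2} \<inter> {0,3})"
proof -
  have h: "closed_segment (P 0) (P 2) \<inter> closed_segment (P 0) (P 3) \<subseteq> {P 0}"
    by (rule adj_lemma) (simp add: P_def)
  have eq: "P ` ({0,2} \<inter> {0,3}) = {P 0}" by auto
  show ?thesis unfolding eq  by (rule h)
qed

lemma loc_e_02_12: "closed_segment (P 0) (P 2) \<inter> closed_segment (P 1) (P 2) \<subseteq> P ` ({0,2} \<inter> {1,2})"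
proof -
  have h: "closed_segment (P 2) (P 0) \<inter> closed_segment (P 2) (P 1) \<subseteq> {P 2}"
    by (rule adj_lemma) (simp add: P_def)
  have eq: "P ` ({0,2} \<inter> {1,2}) = {P 2}" by auto
  show ?thesis unfolding eq closed_segment_commute[of "P 0" "P 2"] closed_segment_commute[of "P 1" "P 2"] by (rule h)
qed

lemma loc_e_02_13: "closed_segment (P 0) (P 2) \<inter> closed_segment (P 1) (P 3) \<subseteq> P ` ({0,2} \<inter> {1,3})"
proof -
  have "closed_segment (P 0) (P 2) \<inter> closed_segment (P 1) (P 3) = {}"
    by (rule sep_lemma[where a="(1)" and b="(0)" and g="(0)"]) (simp_all add: P_def)
  then show ?thesis by simp
qed

lemma loc_e_02_23: "closed_segment (P 0) (P 2) \<inter> closed_segment (P 2) (P 3) \<subseteq> P ` ({0,2} \<inter> {2,3})"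
proof -
  have h: "closed_segment (P 2) (P 0) \<inter> closed_segment (P 2) (P 3) \<subseteq> {P 2}"
    by (rule adj_lemma) (simp add: P_def)
  have eq: "P ` ({0,2} \<inter> {2,3}) = {P 2}" by auto
  show ?thesis unfolding eq closed_segment_commute[of "P 0" "P 2"] by (rule h)
qed

lemma loc_e_03_01: "closed_segment (P 0) (P 3) \<inter> closed_segment (P 0) (P 1) \<subseteq> P ` ({0,3} \<inter> {0,1})"
proof -
  have h: "closed_segment (P 0) (P 3) \<inter> closed_segment (P 0) (P 1) \<subseteq> {P 0}"
    by (rule adj_lemma) (simp add: P_def)
  have eq: "P ` ({0,3} \<inter> {0,1}) = {P 0}" by auto
  show ?thesis unfolding eq  by (rule h)
qed

lemma loc_e_03_02: "closed_segment (P 0) (P 3) \<inter> closed_segment (P 0) (P 2) \<subseteq> P ` ({0,3} \<inter> {0,2})"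
proof -
  have h: "closed_segment (P 0) (P 3) \<inter> closed_segment (P 0) (P 2) \<subseteq> {P 0}"
    by (rule adj_lemma) (simp add: P_def)
  have eq: "P ` ({0,3} \<inter> {0,2}) = {P 0}" by auto
  show ?thesis unfolding eq  by (rule h)
qed

lemma loc_e_03_12: "closed_segment (P 0) (P 3) \<inter> closed_segment (P 1) (P 2) \<subseteq> P ` ({0,3} \<inter> {1,2})"
proof -
  have "closed_segment (P 0) (P 3) \<inter> closed_segment (P 1) (P 2) = {}"
    by (rule sep_lemma[where a="(1)" and b="(1)" and g="(2)"]) (simp_all add: P_def)
  then show ?thesis by simp
qed

lemma loc_e_03_13: "closed_segment (P 0) (P 3) \<inter> closed_segment (P 1) (P 3) \<subseteq> P ` ({0,3} \<inter> {1,3})"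
proof -
  have h: "closed_segment (P 3) (P 0) \<inter> closed_segment (P 3) (P 1) \<subseteq> {P 3}"
    by (rule adj_lemma) (simp add: P_def)
  have eq: "P ` ({0,3} \<inter> {1,3}) = {P 3}" by auto
  show ?thesis unfolding eq closed_segment_commute[of "P 0" "P 3"] closed_segment_commute[of "P 1" "P 3"] by (rule h)
qed

lemma loc_e_03_23: "closed_segment (P 0) (P 3) \<inter> closed_segment (P 2) (P 3) \<subseteq> P ` ({0,3} \<inter> {2,3})"
proof -
  have h: "closed_segment (P 3) (P 0) \<inter> closed_segment (P 3) (P 2) \<subseteq> {P 3}"
    by (rule adj_lemma) (simp add: P_def)
  have eq: "P ` ({0,3} \<inter> {2,3}) = {P 3}" by auto
  show ?thesis unfolding eq closed_segment_commute[of "P 0" "P 3"] closed_segment_commute[of "P 2" "P 3"] by (rule h)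
qed

lemma loc_e_12_01: "closed_segment (P 1) (P 2) \<inter> closed_segment (P 0) (P 1) \<subseteq> P ` ({1,2} \<inter> {0,1})"
proof -
  have h: "closed_segment (P 1) (P 2) \<inter> closed_segment (P 1) (P 0) \<subseteq> {P 1}"
    by (rule adj_lemma) (simp add: P_def)
  have eq: "P ` ({1,2} \<inter> {0,1}) = {P 1}" by auto
  show ?thesis unfolding eq closed_segment_commute[of "P 0" "P 1"] by (rule h)
qed

lemma loc_e_12_02: "closed_segment (P 1) (P 2) \<inter> closed_segment (P 0) (P 2) \<subseteq> P ` ({1,2} \<inter> {0,2})"
proof -
  have h: "closed_segment (P 2) (P 1) \<inter> closed_segment (P 2) (P 0) \<subseteq> {P 2}"
    by (rule adj_lemma) (simp add: P_def)
  have eq: "P ` ({1,2} \<inter> {0,2}) = {P 2}" by auto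
  show ?thesis unfolding eq closed_segment_commute[of "P 1" "P 2"] closed_segment_commute[of "P 0" "P 2"] by (rule h)
qed

lemma loc_e_12_03: "closed_segment (P 1) (P 2) \<inter> closed_segment (P 0) (P 3) \<subseteq> P ` ({1,2} \<inter> {0,3})"
proof -
  have "closed_segment (P 1) (P 2) \<inter> closed_segment (P 0) (P 3) = {}"
    by (rule sep_lemma[where a="(-1)" and b="(-1)" and g="(-4)"]) (simp_all add: P_def)
  then show ?thesis by simp
qed

lemma loc_e_12_13: "closed_segment (P 1) (P 2) \<inter> closed_segment (P 1) (P 3) \<subseteq> P ` ({1,2} \<inter> {1,3})"
proof -
  have h: "closed_segment (P 1) (P 2) \<inter> closed_segment (P 1) (P 3) \<subseteq> {P 1}"
    by (rule adj_lemma) (simp add: P_def)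
  have eq: "P ` ({1,2} \<inter> {1,3}) = {P 1}" by auto
  show ?thesis unfolding eq  by (rule h)
qed

lemma loc_e_12_23: "closed_segment (P 1) (P 2) \<inter> closed_segment (P 2) (P 3) \<subseteq> P ` ({1,2} \<inter> {2,3})"
proof -
  have h: "closed_segment (P 2) (P 1) \<inter> closed_segment (P 2) (P 3) \<subseteq> {P 2}"
    by (rule adj_lemma) (simp add: P_def)
  have eq: "P ` ({1,2} \<inter> {2,3}) = {P 2}" by auto
  show ?thesis unfolding eq closed_segment_commute[of "P 1" "P 2"] by (rule h)
qed

lemma loc_e_13_01: "closed_segment (P 1) (P 3) \<inter> closed_segment (P 0) (P 1) \<subseteq> P ` ({1,3} \<inter> {0,1})"
proof -
  have h: "closed_segment (P 1) (P 3) \<inter> closed_segment (P 1) (P 0) \<subseteq> {P 1}"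
    by (rule adj_lemma) (simp add: P_def)
  have eq: "P ` ({1,3} \<inter> {0,1}) = {P 1}" by auto
  show ?thesis unfolding eq closed_segment_commute[of "P 0" "P 1"] by (rule h)
qed

lemma loc_e_13_02: "closed_segment (P 1) (P 3) \<inter> closed_segment (P 0) (P 2) \<subseteq> P ` ({1,3} \<inter> {0,2})"
proof -
  have "closed_segment (P 1) (P 3) \<inter> closed_segment (P 0) (P 2) = {}"
    by (rule sep_lemma[where a="(-1)" and b="(0)" and g="(-1)"]) (simp_all add: P_def)
  then show ?thesis by simp
qed

lemma loc_e_13_03: "closed_segment (P 1) (P 3) \<inter> closed_segment (P 0) (P 3) \<subseteq> P ` ({1,3} \<inter> {0,3})"
proof -
  have h: "closed_segment (P 3) (P 1) \<inter> closed_segment (P 3) (P 0) \<subseteq> {P 3}"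
    by (rule adj_lemma) (simp add: P_def)
  have eq: "P ` ({1,3} \<inter> {0,3}) = {P 3}" by auto
  show ?thesis unfolding eq closed_segment_commute[of "P 1" "P 3"] closed_segment_commute[of "P 0" "P 3"] by (rule h)
qed

lemma loc_e_13_12: "closed_segment (P 1) (P 3) \<inter> closed_segment (P 1) (P 2) \<subseteq> P ` ({1,3} \<inter> {1,2})"
proof -
  have h: "closed_segment (P 1) (P 3) \<inter> closed_segment (P 1) (P 2) \<subseteq> {P 1}"
    by (rule adj_lemma) (simp add: P_def)
  have eq: "P ` ({1,3} \<inter> {1,2}) = {P 1}" by auto
  show ?thesis unfolding eq  by (rule h)
qed

lemma loc_e_13_23: "closed_segment (P 1) (P 3) \<inter> closed_segment (P 2) (P 3) \<subseteq> P ` ({1,3} \<inter> {2,3})"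
proof -
  have h: "closed_segment (P 3) (P 1) \<inter> closed_segment (P 3) (P 2) \<subseteq> {P 3}"
    by (rule adj_lemma) (simp add: P_def)
  have eq: "P ` ({1,3} \<inter> {2,3}) = {P 3}" by auto
  show ?thesis unfolding eq closed_segment_commute[of "P 1" "P 3"] closed_segment_commute[of "P 2" "P 3"] by (rule h)
qed

lemma loc_e_23_01: "closed_segment (P 2) (P 3) \<inter> closed_segment (P 0) (P 1) \<subseteq> P ` ({2,3} \<inter> {0,1})"
proof -
  have "closed_segment (P 2) (P 3) \<inter> closed_segment (P 0) (P 1) = {}"
    by (rule sep_lemma[where a="(0)" and b="(-1)" and g="(-1)"]) (simp_all add: P_def)
  then show ?thesis by simp
qed

lemma loc_e_23_02: "closed_segment (P 2) (P 3) \<inter> closed_segment (P 0) (P 2) \<subseteq> P ` ({2,3} \<inter> {0,2})"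
proof -
  have h: "closed_segment (P 2) (P 3) \<inter> closed_segment (P 2) (P 0) \<subseteq> {P 2}"
    by (rule adj_lemma) (simp add: P_def)
  have eq: "P ` ({2,3} \<inter> {0,2}) = {P 2}" by auto
  show ?thesis unfolding eq closed_segment_commute[of "P 0" "P 2"] by (rule h)
qed

lemma loc_e_23_03: "closed_segment (P 2) (P 3) \<inter> closed_segment (P 0) (P 3) \<subseteq> P ` ({2,3} \<inter> {0,3})"
proof -
  have h: "closed_segment (P 3) (P 2) \<inter> closed_segment (P 3) (P 0) \<subseteq> {P 3}"
    by (rule adj_lemma) (simp add: P_def)
  have eq: "P ` ({2,3} \<inter> {0,3}) = {P 3}" by auto
  show ?thesis unfolding eq closed_segment_commute[of "P 2" "P 3"] closed_segment_commute[of "P 0" "P 3"] by (rule h)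
qed

lemma loc_e_23_12: "closed_segment (P 2) (P 3) \<inter> closed_segment (P 1) (P 2) \<subseteq> P ` ({2,3} \<inter> {1,2})"
proof -
  have h: "closed_segment (P 2) (P 3) \<inter> closed_segment (P 2) (P 1) \<subseteq> {P 2}"
    by (rule adj_lemma) (simp add: P_def)
  have eq: "P ` ({2,3} \<inter> {1,2}) = {P 2}" by auto
  show ?thesis unfolding eq closed_segment_commute[of "P 1" "P 2"] by (rule h)
qed

lemma loc_e_23_13: "closed_segment (P 2) (P 3) \<inter> closed_segment (P 1) (P 3) \<subseteq> P ` ({2,3} \<inter> {1,3})"
proof -
  have h: "closed_segment (P 3) (P 2) \<inter> closed_segment (P 3) (P 1) \<subseteq> {P 3}"
    by (rule adj_lemma) (simp add: P_def)
  have eq: "P ` ({2,3} \<inter> {1,3}) = {P 3}" by auto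
  show ?thesis unfolding eq closed_segment_commute[of "P 2" "P 3"] closed_segment_commute[of "P 1" "P 3"] by (rule h)
qed

lemma loc_v_3_01: "P 3 \<notin> closed_segment (P 0) (P 1)"
  by (rule psep_lemma[where a="(0)" and b="(1)" and g="(0)"]) (simp_all add: P_def)

lemma loc_v_3_02: "P 3 \<notin> closed_segment (P 0) (P 2)"
  by (rule psep_lemma[where a="(1)" and b="(0)" and g="(0)"]) (simp_all add: P_def)

lemma loc_v_3_12: "P 3 \<notin> closed_segment (P 1) (P 2)"
  by (rule psep_lemma[where a="(-1)" and b="(-1)" and g="(-4)"]) (simp_all add: P_def)

lemma loc_v_0_12: "P 0 \<notin> closed_segment (P 1) (P 2)"
  by (rule psep_lemma[where a="(-1)" and b="(-1)" and g="(-4)"]) (simp_all add: P_def)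

lemma loc_v_0_13: "P 0 \<notin> closed_segment (P 1) (P 3)"
  by (rule psep_lemma[where a="(-1)" and b="(-3)" and g="(-4)"]) (simp_all add: P_def)

lemma loc_v_0_23: "P 0 \<notin> closed_segment (P 2) (P 3)"
  by (rule psep_lemma[where a="(-3)" and b="(-1)" and g="(-4)"]) (simp_all add: P_def)

lemma loc_v_1_02: "P 1 \<notin> closed_segment (P 0) (P 2)"
  by (rule psep_lemma[where a="(1)" and b="(0)" and g="(0)"]) (simp_all add: P_def)

lemma loc_v_1_03: "P 1 \<notin> closed_segment (P 0) (P 3)"
  by (rule psep_lemma[where a="(1)" and b="(-1)" and g="(0)"]) (simp_all add: P_def)

lemma loc_v_1_23: "P 1 \<notin> closed_segment (P 2) (P 3)"
  by (rule psep_lemma[where a="(3)" and b="(1)" and g="(4)"]) (simp_all add: P_def)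

lemma loc_v_2_01: "P 2 \<notin> closed_segment (P 0) (P 1)"
  by (rule psep_lemma[where a="(0)" and b="(1)" and g="(0)"]) (simp_all add: P_def)

lemma loc_v_2_03: "P 2 \<notin> closed_segment (P 0) (P 3)"
  by (rule psep_lemma[where a="(-1)" and b="(1)" and g="(0)"]) (simp_all add: P_def)

lemma loc_v_2_13: "P 2 \<notin> closed_segment (P 1) (P 3)"
  by (rule psep_lemma[where a="(1)" and b="(3)" and g="(4)"]) (simp_all add: P_def)

lemmas loc_e_facts = loc_e_01_02 loc_e_01_03 loc_e_01_12 loc_e_01_13 loc_e_01_23 loc_e_02_01 loc_e_02_03 loc_e_02_12 loc_e_02_13 loc_e_02_23 loc_e_03_01 loc_e_03_02 loc_e_03_12 loc_e_03_13 loc_e_03_23 loc_e_12_01 loc_e_12_02 loc_e_12_03 loc_e_12_13 loc_e_12_23 loc_e_13_01 loc_e_13_02 loc_e_13_03 loc_e_13_12 loc_e_13_23 loc_e_23_01 loc_e_23_02 loc_e_23_03 loc_e_23_12 loc_e_23_13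

lemmas loc_v_facts = loc_v_3_01 loc_v_3_02 loc_v_3_12 loc_v_0_12 loc_v_0_13 loc_v_0_23 loc_v_1_02 loc_v_1_03 loc_v_1_23 loc_v_2_01 loc_v_2_03 loc_v_2_13

definition T :: "nat \<Rightarrow> pt" where "T k = (real (10 * k), 0)"
definition gp :: "nat \<Rightarrow> pt" where "gp u = T (u div 4) + P (u mod 4)"
definition gr :: "nat set \<Rightarrow> pt list" where "gr e = [gp (Min e), gp (Max e)]"
definition GV :: "nat \<Rightarrow> nat set" where "GV m = {..<4 * m}"
definition GE :: "nat \<Rightarrow> nat set set" where
  "GE m = {{4 * k + i, 4 * k + j} | k i j. k < m \<and> i < j \<and> j < 4}"

lemma lt4_cases: "(j::nat) < 4 \<Longrightarrow> j = 0 \<or> j = 1 \<or> j = 2 \<or> j = 3" by auto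

lemma P_fst: "j < 4 \<Longrightarrow> 0 \<le> fst (P j) \<and> fst (P j) \<le> 4"
  by (drule lt4_cases) (auto simp: P_def)

lemma P_inj: "i < 4 \<Longrightarrow> j < 4 \<Longrightarrow> P i = P j \<Longrightarrow> i = j"
  by (drule lt4_cases, drule lt4_cases) (auto simp: P_def)

lemma gp_eq: "j < 4 \<Longrightarrow> gp (4 * k + j) = T k + P j"
  by (simp add: gp_def)

lemma gp_fst: "j < 4 \<Longrightarrow> real (10 * k) \<le> fst (gp (4 * k + j)) \<and> fst (gp (4 * k + j)) \<le> real (10 * k) + 4"
  using P_fst[of j] by (simp add: gp_eq T_def)

lemma strip_seg:
  assumes "i < 4" "j < 4" "x \<in> closed_segment (gp (4 * k + i)) (gp (4 * k + j))"
  shows "real (10 * k) \<le> fst x \<and> fst x \<le> real (10 * k) + 4"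
proof -
  have a: "1 * fst x + 0 * snd x \<le> real (10 * k) + 4"
    by (rule seg_le[OF assms(3)]) (use gp_fst[OF assms(1), of k] gp_fst[OF assms(2), of k] in auto)
  have b: "(-1) * fst x + 0 * snd x \<le> - real (10 * k)"
    by (rule seg_le[OF assms(3)]) (use gp_fst[OF assms(1), of k] gp_fst[OF assms(2), of k] in auto)
  show ?thesis using a b by simp
qed

lemma sep_k: "k < k' \<Longrightarrow> real (10 * k) + 4 < real (10 * k')"
proof -
  assume "k < k'"
  then have "real k + 1 \<le> real k'" by (simp add: Suc_le_eq[symmetric] flip: of_nat_Suc)
  then show ?thesis by simp
qed

lemma copy_disj:
  assumes "k \<noteq> k'" "i < 4" "j < 4" "i' < 4" "j' < 4"
  shows "closed_segment (gp (4 * k + i)) (gp (4 * k + j)) \<inter> closed_segment (gp (4 * k' + i')) (gp (4 * k' + j')) = {}"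
proof (rule ccontr)
  assume "closed_segment (gp (4 * k + i)) (gp (4 * k + j)) \<inter> closed_segment (gp (4 * k' + i')) (gp (4 * k' + j')) \<noteq> {}"
  then obtain x where "x \<in> closed_segment (gp (4 * k + i)) (gp (4 * k + j))"
    "x \<in> closed_segment (gp (4 * k' + i')) (gp (4 * k' + j'))" by blast
  from strip_seg[OF assms(2,3) this(1)] strip_seg[OF assms(4,5) this(2)]
  show False using sep_k[of k k'] sep_k[of k' k] assms(1) by (cases "k < k'") auto
qed

lemma copy_vdisj:
  assumes "k \<noteq> k'" "i < 4" "j < 4" "l < 4"
  shows "gp (4 * k' + l) \<notin> closed_segment (gp (4 * k + i)) (gp (4 * k + j))"
proof
  assume h: "gp (4 * k' + l) \<in> closed_segment (gp (4 * k + i)) (gp (4 * k + j))"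
  from strip_seg[OF assms(2,3) h] gp_fst[OF assms(4), of k']
  show False using sep_k[of k k'] sep_k[of k' k] assms(1) by (cases "k < k'") auto
qed

lemma loc_e:
  assumes "i < j" "j < 4" "i' < j'" "j' < 4" "(i, j) \<noteq> (i', j')"
  shows "closed_segment (P i) (P j) \<inter> closed_segment (P i') (P j') \<subseteq> P ` ({i, j} \<inter> {i', j'})"
proof -
  have A: "i = 0 \<and> j = 1 \<or> i = 0 \<and> j = 2 \<or> i = 0 \<and> j = 3 \<or> i = 1 \<and> j = 2 \<or> i = 1 \<and> j = 3 \<or> i = 2 \<and> j = 3"
    using assms(1,2) by auto
  have B: "i' = 0 \<and> j' = 1 \<or> i' = 0 \<and> j' = 2 \<or> i' = 0 \<and> j' = 3 \<or> i' = 1 \<and> j' = 2 \<or> i' = 1 \<and> j' = 3 \<or> i' = 2 \<and> j' = 3"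
    using assms(3,4) by auto
  show ?thesis
    using A B assms(5)
    apply (elim disjE conjE)
    apply (hypsubst, (rule loc_e_facts | simp))+
    done
qed

lemma loc_v:
  assumes "i < j" "j < 4" "l < 4" "l \<noteq> i" "l \<noteq> j"
  shows "P l \<notin> closed_segment (P i) (P j)"
proof -
  have A: "i = 0 \<and> j = 1 \<or> i = 0 \<and> j = 2 \<or> i = 0 \<and> j = 3 \<or> i = 1 \<and> j = 2 \<or> i = 1 \<and> j = 3 \<or> i = 2 \<and> j = 3"
    using assms(1,2) by auto
  have B: "l = 0 \<or> l = 1 \<or> l = 2 \<or> l = 3" using assms(3) by auto
  show ?thesis
    using A B assms(4,5)
    apply (elim disjE conjE)
    apply (hypsubst, (rule loc_v_facts | simp))+
    done
qed

lemma same_copy_e: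
  assumes "i < j" "j < 4" "i' < j'" "j' < 4" "(i, j) \<noteq> (i', j')"
  shows "closed_segment (gp (4 * k + i)) (gp (4 * k + j)) \<inter> closed_segment (gp (4 * k + i')) (gp (4 * k + j'))
    \<subseteq> gp ` ({4 * k + i, 4 * k + j} \<inter> {4 * k + i', 4 * k + j'})"
proof
  fix x assume x: "x \<in> closed_segment (gp (4 * k + i)) (gp (4 * k + j)) \<inter> closed_segment (gp (4 * k + i')) (gp (4 * k + j'))"
  have xe: "x = T k + (x - T k)" by simp
  have e: "gp (4 * k + i) = T k + P i" "gp (4 * k + j) = T k + P j"
     "gp (4 * k + i') = T k + P i'" "gp (4 * k + j') = T k + P j'"
    using assms by (simp_all add: gp_eq)
  have "T k + (x - T k) \<in> closed_segment (T k + P i) (T k + P j)"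
    "T k + (x - T k) \<in> closed_segment (T k + P i') (T k + P j')"
    using x unfolding e by simp_all
  then have "x - T k \<in> closed_segment (P i) (P j) \<inter> closed_segment (P i') (P j')"
    unfolding closed_segment_translation_eq by blast
  then obtain l where l: "l \<in> {i, j} \<inter> {i', j'}" "x - T k = P l" using loc_e[OF assms] by blast
  have "l < 4" using l(1) assms by auto
  have "x = T k + P l" using l(2) by (metis add.commute diff_add_cancel)
  then have "x = gp (4 * k + l)" using gp_eq[OF \<open>l < 4\<close>, of k] by simp
  moreover have "4 * k + l \<in> {4 * k + i, 4 * k + j} \<inter> {4 * k + i', 4 * k + j'}" using l(1) by auto
  ultimately show "x \<in> gp ` ({4 * k + i, 4 * k + j} \<inter> {4 * k + i', 4 * k + j'})" by blast
qed

lemma same_copy_v: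
  assumes "i < j" "j < 4" "l < 4" "l \<noteq> i" "l \<noteq> j"
  shows "gp (4 * k + l) \<notin> closed_segment (gp (4 * k + i)) (gp (4 * k + j))"
proof -
  have e: "gp (4 * k + i) = T k + P i" "gp (4 * k + j) = T k + P j" "gp (4 * k + l) = T k + P l"
    using assms by (simp_all add: gp_eq)
  show ?thesis unfolding e closed_segment_translation_eq using loc_v[OF assms] .
qed

lemma poly2: "poly_path [a, b] = closed_segment a b"
  by (simp add: poly_path_def seg_def lessThan_Suc)

lemma GE_E:
  assumes "e \<in> GE m"
  obtains k i j where "k < m" "i < j" "j < 4" "e = {4 * k + i, 4 * k + j}"
  using assms unfolding GE_def by blast

lemma GE_I: "k < m \<Longrightarrow> i < j \<Longrightarrow> j < 4 \<Longrightarrow> {4 * k + i, 4 * k + j} \<in> GE m"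
  unfolding GE_def by blast

lemma gr_eq: "i < j \<Longrightarrow> gr {4 * k + i, 4 * k + j} = [gp (4 * k + i), gp (4 * k + j)]"
  by (simp add: gr_def min_def max_def)

lemma gp_inj: "inj_on gp (GV m)"
proof
  fix u v assume "u \<in> GV m" "v \<in> GV m" and h: "gp u = gp v"
  define ku iu kv iv where "ku = u div 4" "iu = u mod 4" "kv = v div 4" "iv = v mod 4"
  have mu: "iu < 4" and mv: "iv < 4" by (simp_all add: ku_iu_kv_iv_def)
  have gu: "gp u = T ku + P iu" and gv: "gp v = T kv + P iv" by (simp_all add: gp_def ku_iu_kv_iv_def)
  have f: "real (10 * ku) + fst (P iu) = real (10 * kv) + fst (P iv)"
    using arg_cong[OF h, of fst] unfolding gu gv by (simp add: T_def)
  have k: "ku = kv"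
  proof (rule ccontr)
    assume ne: "ku \<noteq> kv"
    show False
    proof (cases "ku < kv")
      case True
      from sep_k[OF True] P_fst[OF mu] P_fst[OF mv] f show False by linarith
    next
      case False
      then have "kv < ku" using ne by simp
      from sep_k[OF this] P_fst[OF mu] P_fst[OF mv] f show False by linarith
    qed
  qed
  have "P iu = P iv" using h unfolding gu gv k by simp
  then have i: "iu = iv" using P_inj mu mv by blast
  have "u = 4 * ku + iu" "v = 4 * kv + iv" by (simp_all add: ku_iu_kv_iv_def)
  then show "u = v" using k i by simp
qed

lemma planar_GE: "planar_poly_drawing (GV m) (GE m) gp gr"
  unfolding planar_poly_drawing_def
proof (intro conjI ballI impI)
  show "inj_on gp (GV m)" by (rule gp_inj)
next
  fix e assume e: "e \<in> GE m"
  then obtain k i j where kij: "k < m" "i < j" "j < 4" "e = {4 * k + i, 4 * k + j}" by (rule GE_E)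
  have inV: "4 * k + i \<in> GV m" "4 * k + j \<in> GV m" using kij by (auto simp: GV_def)
  have "gp (4 * k + i) \<noteq> gp (4 * k + j)"
  proof
    assume "gp (4 * k + i) = gp (4 * k + j)"
    from inj_onD[OF gp_inj this inV] show False using kij by simp
  qed
  then show "simple_polyline (gr e)" using kij by (simp add: gr_eq simple_polyline_def)
  show "\<exists>u v. e = {u, v} \<and> hd (gr e) = gp u \<and> last (gr e) = gp v"
    using kij by (auto simp: gr_eq)
next
  fix e e' assume e: "e \<in> GE m" and e': "e' \<in> GE m" and ne: "e \<noteq> e'"
  obtain k i j where kij: "k < m" "i < j" "j < 4" "e = {4 * k + i, 4 * k + j}" using e by (rule GE_E)
  obtain k' i' j' where kij': "k' < m" "i' < j'" "j' < 4" "e' = {4 * k' + i', 4 * k' + j'}" using e' by (rule GE_E)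
  show "poly_path (gr e) \<inter> poly_path (gr e') \<subseteq> gp ` (e \<inter> e')"
  proof (cases "k = k'")
    case True
    have "(i, j) \<noteq> (i', j')" using ne kij kij' True by auto
    then show ?thesis using same_copy_e[OF kij(2,3) kij'(2,3), of k] kij kij' True
      by (simp add: gr_eq poly2)
  next
    case False
    then show ?thesis using copy_disj[OF False, of i j i' j'] kij kij'
      by (simp add: gr_eq poly2)
  qed
next
  fix e w assume e: "e \<in> GE m" and w: "w \<in> GV m" "w \<notin> e"
  obtain k i j where kij: "k < m" "i < j" "j < 4" "e = {4 * k + i, 4 * k + j}" using e by (rule GE_E)
  have wd: "w = 4 * (w div 4) + w mod 4" and wm: "w mod 4 < 4" by simp_all
  show "gp w \<notin> poly_path (gr e)"
  proof (cases "w div 4 = k")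
    case True
    have "w mod 4 \<noteq> i" "w mod 4 \<noteq> j" using w(2) kij(4) wd True by auto
    then have "gp (4 * k + w mod 4) \<notin> closed_segment (gp (4 * k + i)) (gp (4 * k + j))"
      by (intro same_copy_v kij wm)
    then show ?thesis using kij True wd by (metis gr_eq poly2)
  next
    case False
    have "gp (4 * (w div 4) + w mod 4) \<notin> closed_segment (gp (4 * k + i)) (gp (4 * k + j))"
      using copy_vdisj[of k "w div 4" i j "w mod 4"] False kij wm by auto
    then show ?thesis using kij wd by (metis gr_eq poly2)
  qed
qed


lemma GE_sub: "e \<in> GE m \<Longrightarrow> e \<subseteq> GV m"
  by (erule GE_E) (auto simp: GV_def)

lemma GE_finite: "finite (GE m)"
proof -
  have "GE m \<subseteq> Pow (GV m)" using GE_sub by blast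
  then show ?thesis by (rule finite_subset) (simp add: GV_def)
qed

lemma simple_GE: "simple_graph (GV m) (GE m)"
  unfolding simple_graph_def
proof (intro conjI ballI)
  show "finite (GV m)" by (simp add: GV_def)
next
  fix e assume "e \<in> GE m"
  then obtain k i j where kij: "k < m" "i < j" "j < 4" "e = {4 * k + i, 4 * k + j}" by (rule GE_E)
  have "4 * k + i \<in> GV m" "4 * k + j \<in> GV m" using GE_sub[OF \<open>e \<in> GE m\<close>] kij(4) by auto
  moreover have "4 * k + i \<noteq> 4 * k + j" using kij by simp
  ultimately show "\<exists>u v. u \<in> GV m \<and> v \<in> GV m \<and> u \<noteq> v \<and> e = {u, v}" using kij(4) by blast
qed

lemma deg_GE: "degree (GE m) v \<le> 4"
proof -
  have sub: "{e \<in> GE m. v \<in> e} \<subseteq> (\<lambda>w. {v, w}) ` {4 * (v div 4)..<4 * (v div 4) + 4}"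
  proof
    fix e assume "e \<in> {e \<in> GE m. v \<in> e}"
    then have e: "e \<in> GE m" "v \<in> e" by auto
    then obtain k i j where kij: "k < m" "i < j" "j < 4" "e = {4 * k + i, 4 * k + j}" by (elim GE_E)
    show "e \<in> (\<lambda>w. {v, w}) ` {4 * (v div 4)..<4 * (v div 4) + 4}"
    proof (cases "v = 4 * k + i")
      case True
      then have "v div 4 = k" using kij by simp
      then show ?thesis using kij True by (auto intro!: image_eqI[of _ _ "4 * k + j"])
    next
      case False
      then have v: "v = 4 * k + j" using e(2) kij(4) by auto
      then have "v div 4 = k" using kij by simp
      then show ?thesis using kij v by (auto intro!: image_eqI[of _ _ "4 * k + i"])
    qed
  qed
  have "degree (GE m) v = card {e \<in> GE m. v \<in> e}" by (simp add: degree_def)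
  also have "\<dots> \<le> card ((\<lambda>w. {v, w}) ` {4 * (v div 4)..<4 * (v div 4) + 4})"
    by (rule card_mono[OF _ sub]) simp
  also have "\<dots> \<le> card {4 * (v div 4)..<4 * (v div 4) + 4}" by (rule card_image_le) simp
  also have "\<dots> = 4" by simp
  finally show ?thesis .
qed

lemma k_planar_GE: "k_planar 4 (GV m) (GE m)"
  unfolding k_planar_def planar_graph_def using simple_GE planar_GE deg_GE by blast

lemma copy_bend:
  assumes dr: "planar_octilinear_drawing (GV m) (GE m) q r" and k: "k < m"
  shows "\<exists>e\<in>GE m. (\<forall>x\<in>e. x div 4 = k) \<and> bends (r e) \<noteq> 0"
proof (rule ccontr)
  assume h: "\<not> ?thesis"
  have E: "{4 * k, 4 * k + 1} \<in> GE m" "{4 * k, 4 * k + 2} \<in> GE m" "{4 * k, 4 * k + 3} \<in> GE m"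
    "{4 * k + 1, 4 * k + 2} \<in> GE m" "{4 * k + 1, 4 * k + 3} \<in> GE m" "{4 * k + 2, 4 * k + 3} \<in> GE m"
    using GE_I[OF k, of 0 1] GE_I[OF k, of 0 2] GE_I[OF k, of 0 3] GE_I[OF k, of 1 2]
      GE_I[OF k, of 1 3] GE_I[OF k, of 2 3] by simp_all
  have V: "4 * k \<in> GV m" "4 * k + 1 \<in> GV m" "4 * k + 2 \<in> GV m" "4 * k + 3 \<in> GV m"
    using k by (auto simp: GV_def)
  have z: "bends (r {4 * k, 4 * k + 1}) = 0" "bends (r {4 * k, 4 * k + 2}) = 0" "bends (r {4 * k, 4 * k + 3}) = 0"
    "bends (r {4 * k + 1, 4 * k + 2}) = 0" "bends (r {4 * k + 1, 4 * k + 3}) = 0" "bends (r {4 * k + 2, 4 * k + 3}) = 0"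
    using h E by auto
  show False by (rule k4_drawing[OF dr V _ _ _ _ _ _ E z]) simp_all
qed

lemma total_ge:
  assumes dr: "planar_octilinear_drawing (GV m) (GE m) q r"
  shows "m \<le> total_bends (GE m) r"
proof -
  have "\<forall>k\<in>{..<m}. \<exists>e. e \<in> GE m \<and> (\<forall>x\<in>e. x div 4 = k) \<and> bends (r e) \<noteq> 0"
    using copy_bend[OF dr] by blast
  then obtain ed where ed: "\<forall>k\<in>{..<m}. ed k \<in> GE m \<and> (\<forall>x\<in>ed k. x div 4 = k) \<and> bends (r (ed k)) \<noteq> 0"
    by (metis bchoice)
  have inj: "inj_on ed {..<m}"
  proof
    fix k k' assume kk: "k \<in> {..<m}" "k' \<in> {..<m}" "ed k = ed k'"
    have "ed k \<in> GE m" using ed kk by blast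
    then obtain a b c where "ed k = {4 * a + b, 4 * a + c}" by (elim GE_E)
    then have x: "4 * a + b \<in> ed k" by auto
    then have "(4 * a + b) div 4 = k" using ed kk by blast
    moreover have "(4 * a + b) div 4 = k'" using ed kk x by (metis)
    ultimately show "k = k'" by simp
  qed
  have sub: "ed ` {..<m} \<subseteq> GE m" using ed by blast
  have "m = card (ed ` {..<m})" using card_image[OF inj] by simp
  also have "\<dots> = (\<Sum>e\<in>ed ` {..<m}. 1)" by simp
  also have "\<dots> \<le> (\<Sum>e\<in>ed ` {..<m}. bends (r e))"
    by (rule sum_mono) (use ed in \<open>auto simp: Suc_le_eq\<close>)
  also have "\<dots> \<le> (\<Sum>e\<in>GE m. bends (r e))"
    by (rule sum_mono2[OF GE_finite sub]) simp
  finally show ?thesis by (simp add: total_bends_def)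
qed

lemma no_bendless:
  assumes m: "1 \<le> m"
  shows "\<not> (\<exists>q r. planar_octilinear_drawing (GV m) (GE m) q r \<and> (\<forall>e\<in>GE m. bends (r e) = 0))"
proof
  assume "\<exists>q r. planar_octilinear_drawing (GV m) (GE m) q r \<and> (\<forall>e\<in>GE m. bends (r e) = 0)"
  then obtain q r where dr: "planar_octilinear_drawing (GV m) (GE m) q r" and z: "\<forall>e\<in>GE m. bends (r e) = 0"
    by blast
  from copy_bend[OF dr, of 0] m z show False by auto
qed

lemma bend_bound:
  assumes dr: "planar_octilinear_drawing (GV m) (GE m) q r"
  shows "1/4 * real (card (GV m)) \<le> real (total_bends (GE m) r)"
proof -
  have "m \<le> total_bends (GE m) r" by (rule total_ge[OF dr])
  then have "real m \<le> real (total_bends (GE m) r)" by simp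
  moreover have "card (GV m) = 4 * m" by (simp add: GV_def)
  ultimately show ?thesis by simp
qed

theorem mainTheorem4:
  shows "\<exists>C :: (nat set \<times> nat set set) set.
    (\<forall>N. \<exists>(V, E)\<in>C. card V > N) \<and>
    (\<forall>(V, E)\<in>C. k_planar 4 V E) \<and>
    (\<forall>(V, E)\<in>C. \<not> (\<exists>q r. planar_octilinear_drawing V E q r \<and> (\<forall>e\<in>E. bends (r e) = 0))) \<and>
    (\<exists>c :: real. c > 0 \<and> (\<exists>n0. \<forall>(V, E)\<in>C. card V \<ge> n0 \<longrightarrow>
       (\<forall>q r. planar_octilinear_drawing V E q r \<and> (\<forall>e\<in>E. bends (r e) \<le> 1) \<longrightarrow>
          real (total_bends E r) \<ge> c * real (card V))))"
proof (intro exI[of _ "(\<lambda>m. (GV m, GE m)) ` {m. 1 \<le> m}"] conjI)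
  show "\<forall>N. \<exists>(V, E)\<in>(\<lambda>m. (GV m, GE m)) ` {m. 1 \<le> m}. card V > N"
  proof
    fix N
    have "(GV (N + 1), GE (N + 1)) \<in> (\<lambda>m. (GV m, GE m)) ` {m. 1 \<le> m}" by auto
    moreover have "card (GV (N + 1)) > N" by (simp add: GV_def)
    ultimately show "\<exists>(V, E)\<in>(\<lambda>m. (GV m, GE m)) ` {m. 1 \<le> m}. card V > N" by blast
  qed
  show "\<forall>(V, E)\<in>(\<lambda>m. (GV m, GE m)) ` {m. 1 \<le> m}. k_planar 4 V E"
    using k_planar_GE by auto
  show "\<forall>(V, E)\<in>(\<lambda>m. (GV m, GE m)) ` {m. 1 \<le> m}.
     \<not> (\<exists>q r. planar_octilinear_drawing V E q r \<and> (\<forall>e\<in>E. bends (r e) = 0))"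
    using no_bendless by auto
  show "\<exists>c :: real. c > 0 \<and> (\<exists>n0. \<forall>(V, E)\<in>(\<lambda>m. (GV m, GE m)) ` {m. 1 \<le> m}. card V \<ge> n0 \<longrightarrow>
       (\<forall>q r. planar_octilinear_drawing V E q r \<and> (\<forall>e\<in>E. bends (r e) \<le> 1) \<longrightarrow>
          real (total_bends E r) \<ge> c * real (card V)))"
    using bend_bound by (intro exI[of _ "1/4"] conjI exI[of _ 0]) auto
qed

end
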